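(* Let $V$ be a set of $N\geq3$ truth values with a partial order $\leq$ having $0$ as least and $1$ as greatest element, let $\models_{\leq}$ be the associated order-theoretic truth-relation, and assume the semantics is at least atomic expressive. Then $\models_{\leq}$ admits no G-negation and no G-conditional. Moreover, it admits a G-conjunction and a G-disjunction if and only if it is total, i.e. any two truth values other than $0,1$ are comparable under $\leq$.
   Context: $\gamma\models_{\leq}\delta$ iff ($\exists x\in\gamma,\exists y\in\delta: x\leq y$) or $0\in\gamma$ or $1\in\delta$. Semantics: valuations mapping atoms to $V$, connectives interpreted by fixed truth functions, extended compositionally, every assignment of values to finitely many distinct atoms realized. Atomic expressive: for every $\gamma\subseteq V$ some set of formulas $\Gamma$ and valuation $v$ have $v(\Gamma)=\gamma$. $\Gamma\vdash\Delta$ iff $v(\Gamma)\models_{\leq}v(\Delta)$ for all $v$; $\Gamma,A=\Gamma\cup\{A\}$. Admitting a G-connective means some truth function makes a connective satisfy, for all $\Gamma,\Delta,A,B$: G-conjunction: $\Gamma,A\wedge B\vdash\Delta$ iff $\Gamma,A,B\vdash\Delta$; $\Gamma\vdash A\wedge B,\Delta$ iff ($\Gamma\vdash A,\Delta$ and $\Gamma\vdash B,\Delta$). G-disjunction: $\Gamma\vdash A\vee B,\Delta$ iff $\Gamma\vdash A,B,\Delta$; $\Gamma,A\vee B\vdash\Delta$ iff ($\Gamma,A\vdash\Delta$ and $\Gamma,B\vdash\Delta$). G-negation: $\Gamma,\neg A\vdash\Delta$ iff $\Gamma\vdash A,\Delta$; $\Gamma\vdash\neg A,\Delta$ iff $\Gamma,A\vdash\Delta$.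 G-conditional: $\Gamma\vdash A\to B,\Delta$ iff $\Gamma,A\vdash B,\Delta$; $\Gamma,A\to B\vdash\Delta$ iff ($\Gamma\vdash A,\Delta$ and $\Gamma,B\vdash\Delta$). *)

theory Defs
  imports Main
begin

(* Order-theoretic truth relation |=_<= on sets of truth values;
   le is the partial order, bt the least element (0), tp the greatest (1). *)
definition tr :: "('v \<Rightarrow> 'v \<Rightarrow> bool) \<Rightarrow> 'v \<Rightarrow> 'v \<Rightarrow> 'v set \<Rightarrow> 'v set \<Rightarrow> bool" where
  "tr le bt tp g d \<longleftrightarrow> (\<exists>x\<in>g. \<exists>y\<in>d. le x y) \<or> bt \<in> g \<or> tp \<in> d"

definition partial_order_on_carrier :: "'v set \<Rightarrow> ('v \<Rightarrow> 'v \<Rightarrow> bool) \<Rightarrow> bool" where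
  "partial_order_on_carrier V le \<longleftrightarrow>
     (\<forall>x\<in>V. le x x) \<and>
     (\<forall>x\<in>V. \<forall>y\<in>V. le x y \<and> le y x \<longrightarrow> x = y) \<and>
     (\<forall>x\<in>V. \<forall>y\<in>V. \<forall>z\<in>V. le x y \<and> le y z \<longrightarrow> le x z)"

definition total_order_rel :: "'v set \<Rightarrow> ('v \<Rightarrow> 'v \<Rightarrow> bool) \<Rightarrow> 'v \<Rightarrow> 'v \<Rightarrow> bool" where
  "total_order_rel V le bt tp \<longleftrightarrow>
     (\<forall>x\<in>V - {bt, tp}. \<forall>y\<in>V - {bt, tp}. le x y \<or> le y x)"

datatype bfm = BAt nat | BOp bfm bfm
datatype ufm = UAt nat | UOp ufm

primrec beval :: "(nat \<Rightarrow> 'v) \<Rightarrow> ('v \<Rightarrow> 'v \<Rightarrow> 'v) \<Rightarrow> bfm \<Rightarrow> 'v" where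
  "beval v f (BAt n) = v n"
| "beval v f (BOp A B) = f (beval v f A) (beval v f B)"

primrec ueval :: "(nat \<Rightarrow> 'v) \<Rightarrow> ('v \<Rightarrow> 'v) \<Rightarrow> ufm \<Rightarrow> 'v" where
  "ueval v f (UAt n) = v n"
| "ueval v f (UOp A) = f (ueval v f A)"

definition bcons :: "'v set \<Rightarrow> ('v \<Rightarrow> 'v \<Rightarrow> bool) \<Rightarrow> 'v \<Rightarrow> 'v \<Rightarrow> ('v \<Rightarrow> 'v \<Rightarrow> 'v)
                     \<Rightarrow> bfm set \<Rightarrow> bfm set \<Rightarrow> bool" where
  "bcons V le bt tp f G D \<longleftrightarrow>
     (\<forall>v. (\<forall>n. v n \<in> V) \<longrightarrow> tr le bt tp (beval v f ` G) (beval v f ` D))"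

definition ucons :: "'v set \<Rightarrow> ('v \<Rightarrow> 'v \<Rightarrow> bool) \<Rightarrow> 'v \<Rightarrow> 'v \<Rightarrow> ('v \<Rightarrow> 'v)
                     \<Rightarrow> ufm set \<Rightarrow> ufm set \<Rightarrow> bool" where
  "ucons V le bt tp f G D \<longleftrightarrow>
     (\<forall>v. (\<forall>n. v n \<in> V) \<longrightarrow> tr le bt tp (ueval v f ` G) (ueval v f ` D))"

definition admits_G_conj :: "'v set \<Rightarrow> ('v \<Rightarrow> 'v \<Rightarrow> bool) \<Rightarrow> 'v \<Rightarrow> 'v \<Rightarrow> bool" where
  "admits_G_conj V le bt tp \<longleftrightarrow> (\<exists>f. (\<forall>x\<in>V. \<forall>y\<in>V. f x y \<in> V) \<and>
     (\<forall>G D A B.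
        (bcons V le bt tp f (insert (BOp A B) G) D \<longleftrightarrow> bcons V le bt tp f (insert A (insert B G)) D) \<and>
        (bcons V le bt tp f G (insert (BOp A B) D) \<longleftrightarrow>
           bcons V le bt tp f G (insert A D) \<and> bcons V le bt tp f G (insert B D))))"

definition admits_G_disj :: "'v set \<Rightarrow> ('v \<Rightarrow> 'v \<Rightarrow> bool) \<Rightarrow> 'v \<Rightarrow> 'v \<Rightarrow> bool" where
  "admits_G_disj V le bt tp \<longleftrightarrow> (\<exists>f. (\<forall>x\<in>V. \<forall>y\<in>V. f x y \<in> V) \<and>
     (\<forall>G D A B.
        (bcons V le bt tp f G (insert (BOp A B) D) \<longleftrightarrow> bcons V le bt tp f G (insert A (insert B D))) \<and>
        (bcons V le bt tp f (insert (BOp A B) G) D \<longleftrightarrow>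
           bcons V le bt tp f (insert A G) D \<and> bcons V le bt tp f (insert B G) D)))"

definition admits_G_neg :: "'v set \<Rightarrow> ('v \<Rightarrow> 'v \<Rightarrow> bool) \<Rightarrow> 'v \<Rightarrow> 'v \<Rightarrow> bool" where
  "admits_G_neg V le bt tp \<longleftrightarrow> (\<exists>f. (\<forall>x\<in>V. f x \<in> V) \<and>
     (\<forall>G D A.
        (ucons V le bt tp f (insert (UOp A) G) D \<longleftrightarrow> ucons V le bt tp f G (insert A D)) \<and>
        (ucons V le bt tp f G (insert (UOp A) D) \<longleftrightarrow> ucons V le bt tp f (insert A G) D)))"

definition admits_G_cond :: "'v set \<Rightarrow> ('v \<Rightarrow> 'v \<Rightarrow> bool) \<Rightarrow> 'v \<Rightarrow> 'v \<Rightarrow> bool" where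
  "admits_G_cond V le bt tp \<longleftrightarrow> (\<exists>f. (\<forall>x\<in>V. \<forall>y\<in>V. f x y \<in> V) \<and>
     (\<forall>G D A B.
        (bcons V le bt tp f G (insert (BOp A B) D) \<longleftrightarrow> bcons V le bt tp f (insert A G) (insert B D)) \<and>
        (bcons V le bt tp f (insert (BOp A B) G) D \<longleftrightarrow>
           bcons V le bt tp f G (insert A D) \<and> bcons V le bt tp f (insert B G) D)))"

(* Atomic expressivity: every set of truth values is the image of some set of
   formulas (here already of atoms) under some valuation. *)
definition atomic_expressive :: "'v set \<Rightarrow> bool" where
  "atomic_expressive V \<longleftrightarrow>
     (\<forall>g. g \<subseteq> V \<longrightarrow> (\<exists>G :: bfm set. \<exists>v. (\<forall>n. v n \<in> V) \<and> beval v (\<lambda>x y. x) ` G = g))"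

end

theory Submission
  imports Defs
begin

lemma chainfacts:
  assumes F1: "\<forall>y\<in>V. le b y \<longrightarrow> le a y" and F2: "\<forall>x\<in>V. le x a \<longrightarrow> le x b"
    and F3: "b = bt \<longrightarrow> a = bt" and F4: "a = tp \<longrightarrow> b = tp" and g: "g \<subseteq> V" and d: "d \<subseteq> V"
  shows "tr le bt tp (insert a g) d \<longleftrightarrow> tr le bt tp (insert a (insert b g)) d"
    and "tr le bt tp g (insert a d) \<longleftrightarrow> tr le bt tp g (insert a d) \<and> tr le bt tp g (insert b d)"
    and "tr le bt tp g (insert b d) \<longleftrightarrow> tr le bt tp g (insert a (insert b d))"
    and "tr le bt tp (insert b g) d \<longleftrightarrow> tr le bt tp (insert a g) d \<and> tr le bt tp (insert b g) d"
  using assms unfolding tr_def by blast+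

lemma bcons_cong:
  assumes "\<And>v. \<forall>n. v n \<in> V \<Longrightarrow> (tr le bt tp (beval v f ` G) (beval v f ` D) \<longleftrightarrow> tr le bt tp (beval v f ` G') (beval v f ` D'))"
  shows "bcons V le bt tp f G D \<longleftrightarrow> bcons V le bt tp f G' D'"
  using assms unfolding bcons_def by blast

lemma bcons_cong2:
  assumes "\<And>v. \<forall>n. v n \<in> V \<Longrightarrow> (tr le bt tp (beval v f ` G) (beval v f ` D) \<longleftrightarrow>
      tr le bt tp (beval v f ` G1) (beval v f ` D1) \<and> tr le bt tp (beval v f ` G2) (beval v f ` D2))"
  shows "bcons V le bt tp f G D \<longleftrightarrow> bcons V le bt tp f G1 D1 \<and> bcons V le bt tp f G2 D2"
  using assms unfolding bcons_def by blast

theorem theorem6p7: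
  fixes V :: "'v set" and le :: "'v \<Rightarrow> 'v \<Rightarrow> bool" and bt tp :: 'v
  assumes "finite V" and "card V \<ge> 3"
    and "partial_order_on_carrier V le"
    and "bt \<in> V" and "tp \<in> V"
    and "\<forall>x\<in>V. le bt x \<and> le x tp"
    and "atomic_expressive V"
  shows "\<not> admits_G_neg V le bt tp \<and> \<not> admits_G_cond V le bt tp \<and>
         ((admits_G_conj V le bt tp \<and> admits_G_disj V le bt tp) \<longleftrightarrow> total_order_rel V le bt tp)"
proof -
  note fin = assms(1) and c3 = assms(2) and po = assms(3) and btV = assms(4) and tpV = assms(5)
    and bnd = assms(6)
  have refl: "\<And>x. x \<in> V \<Longrightarrow> le x x" using po unfolding partial_order_on_carrier_def by blast
  have anti: "\<And>x y. x \<in> V \<Longrightarrow> y \<in> V \<Longrightarrow> le x y \<Longrightarrow> le y x \<Longrightarrow> x = y"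
    using po unfolding partial_order_on_carrier_def by blast
  have trans: "\<And>x y z. x \<in> V \<Longrightarrow> y \<in> V \<Longrightarrow> z \<in> V \<Longrightarrow> le x y \<Longrightarrow> le y z \<Longrightarrow> le x z"
    using po unfolding partial_order_on_carrier_def by blast
  have "\<not> V \<subseteq> {bt, tp}"
  proof
    assume "V \<subseteq> {bt, tp}"
    then have "card V \<le> card {bt, tp}" by (intro card_mono) auto
    also have "\<dots> \<le> 2" by (simp add: card_insert_le_m1)
    finally show False using c3 by simp
  qed
  then obtain m where mV: "m \<in> V" and mb: "m \<noteq> bt" and mt: "m \<noteq> tp" by blast
  have lebt: "\<And>x. x \<in> V \<Longrightarrow> le x bt \<Longrightarrow> x = bt" using anti bnd btV by blast
  have letp: "\<And>x. x \<in> V \<Longrightarrow> le tp x \<Longrightarrow> x = tp" using anti bnd tpV by blast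
  have bttp: "bt \<noteq> tp" using lebt mV mb bnd by blast
  have neg: "\<not> admits_G_neg V le bt tp"
  proof
    assume "admits_G_neg V le bt tp"
    then obtain f where fV: "\<forall>x\<in>V. f x \<in> V" and H: "\<forall>G D A.
        (ucons V le bt tp f (insert (UOp A) G) D \<longleftrightarrow> ucons V le bt tp f G (insert A D)) \<and>
        (ucons V le bt tp f G (insert (UOp A) D) \<longleftrightarrow> ucons V le bt tp f (insert A G) D)"
      unfolding admits_G_neg_def by blast
    let ?A = "UAt 0"
    have r: "ucons V le bt tp f {?A} {?A}" unfolding ucons_def tr_def using refl by auto
    have 1: "ucons V le bt tp f {UOp ?A, ?A} {}" using H r by blast
    have 2: "ucons V le bt tp f {} {UOp ?A, ?A}" using H r by blast
    have "tr le bt tp {f m, m} {}" using 1 mV unfolding ucons_def by (auto dest: spec[of _ "\<lambda>_. m"])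
    then have "f m = bt" using mb unfolding tr_def by auto
    moreover have "tr le bt tp {} {f m, m}" using 2 mV unfolding ucons_def by (auto dest: spec[of _ "\<lambda>_. m"])
    then have "f m = tp" using mt unfolding tr_def by auto
    ultimately show False using bttp by simp
  qed
  have cond: "\<not> admits_G_cond V le bt tp"
  proof
    assume "admits_G_cond V le bt tp"
    then obtain f where fV: "\<forall>x\<in>V. \<forall>y\<in>V. f x y \<in> V" and H: "\<forall>G D A B.
        (bcons V le bt tp f G (insert (BOp A B) D) \<longleftrightarrow> bcons V le bt tp f (insert A G) (insert B D)) \<and>
        (bcons V le bt tp f (insert (BOp A B) G) D \<longleftrightarrow>
           bcons V le bt tp f G (insert A D) \<and> bcons V le bt tp f (insert B G) D)"
      unfolding admits_G_cond_def by blast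
    let ?A = "BAt 0" and ?B = "BAt 1"
    have r1: "bcons V le bt tp f {?A} {?B, ?A}" unfolding bcons_def tr_def using refl by auto
    have r2: "bcons V le bt tp f {?A} {?A, ?B}" unfolding bcons_def tr_def using refl by auto
    have r3: "bcons V le bt tp f {?B, ?A} {?B}" unfolding bcons_def tr_def using refl by auto
    have 1: "bcons V le bt tp f {} {BOp ?A ?B, ?A}" using H r1 by blast
    have 2: "bcons V le bt tp f {BOp ?A ?B, ?A} {?B}" using H r2 r3 by blast
    let ?v = "\<lambda>n::nat. if n = 0 then m else bt"
    have vV: "\<forall>n. ?v n \<in> V" using mV btV by auto
    have "tr le bt tp {} {f m bt, m}" using 1 vV unfolding bcons_def by (auto dest: spec[of _ ?v])
    then have fm: "f m bt = tp" using mt unfolding tr_def by auto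
    have "tr le bt tp {f m bt, m} {bt}" using 2 vV unfolding bcons_def by (auto dest: spec[of _ ?v])
    then show False unfolding tr_def fm using letp lebt btV mV mb bttp by auto
  qed
  have conj_tot: "total_order_rel V le bt tp" if cj: "admits_G_conj V le bt tp"
    unfolding total_order_rel_def
  proof (intro ballI)
    fix a b assume a: "a \<in> V - {bt, tp}" and b: "b \<in> V - {bt, tp}"
    obtain f where fV: "\<forall>x\<in>V. \<forall>y\<in>V. f x y \<in> V" and H: "\<forall>G D A B.
        (bcons V le bt tp f (insert (BOp A B) G) D \<longleftrightarrow> bcons V le bt tp f (insert A (insert B G)) D) \<and>
        (bcons V le bt tp f G (insert (BOp A B) D) \<longleftrightarrow>
           bcons V le bt tp f G (insert A D) \<and> bcons V le bt tp f G (insert B D))"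
      using cj unfolding admits_G_conj_def by blast
    let ?A = "BAt 0" and ?B = "BAt 1"
    have r1: "bcons V le bt tp f {?A, ?B} {?A}" unfolding bcons_def tr_def using refl by auto
    have r2: "bcons V le bt tp f {?A, ?B} {?B}" unfolding bcons_def tr_def using refl by auto
    have 1: "bcons V le bt tp f {BOp ?A ?B} {?A}" using H r1 by blast
    have 2: "bcons V le bt tp f {BOp ?A ?B} {?B}" using H r2 by blast
    have 3: "bcons V le bt tp f {?A, ?B} {BOp ?A ?B}" using H r1 r2 by blast
    let ?v = "\<lambda>n::nat. if n = 0 then a else if n = 1 then b else bt"
    have vV: "\<forall>n. ?v n \<in> V" using a b btV by auto
    have cV: "f a b \<in> V" using fV a b by auto
    have "tr le bt tp {f a b} {a}" using 1 vV unfolding bcons_def by (auto dest: spec[of _ ?v])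
    then have ca: "le (f a b) a" unfolding tr_def using a bnd by auto
    have "tr le bt tp {f a b} {b}" using 2 vV unfolding bcons_def by (auto dest: spec[of _ ?v])
    then have cb: "le (f a b) b" unfolding tr_def using b bnd by auto
    have "tr le bt tp {a, b} {f a b}" using 3 vV unfolding bcons_def by (auto dest: spec[of _ ?v])
    then have "le a (f a b) \<or> le b (f a b)" unfolding tr_def using a b letp cV ca by auto
    then show "le a b \<or> le b a" using trans[OF _ cV] a b ca cb by blast
  qed
  have tot_both: "admits_G_conj V le bt tp \<and> admits_G_disj V le bt tp"
    if tot: "total_order_rel V le bt tp"
  proof -
    have lin: "\<And>x y. x \<in> V \<Longrightarrow> y \<in> V \<Longrightarrow> le x y \<or> le y x"
      using tot bnd unfolding total_order_rel_def by (metis Diff_iff insertE singletonD)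
    define mn where "mn = (\<lambda>x y. if le x y then x else y)"
    define mx where "mx = (\<lambda>x y. if le x y then y else x)"
    have mnV: "\<forall>x\<in>V. \<forall>y\<in>V. mn x y \<in> V" unfolding mn_def by auto
    have mxV: "\<forall>x\<in>V. \<forall>y\<in>V. mx x y \<in> V" unfolding mx_def by auto
    have evV: "\<And>v h F. \<forall>n. v n \<in> V \<Longrightarrow> \<forall>x\<in>V. \<forall>y\<in>V. h x y \<in> V \<Longrightarrow> beval v h F \<in> V"
    proof -
      fix v h F show "\<forall>n. v n \<in> V \<Longrightarrow> \<forall>x\<in>V. \<forall>y\<in>V. h x y \<in> V \<Longrightarrow> beval v h F \<in> V"
        by (induction F) auto
    qed
    have F: "(\<forall>y\<in>V. le b y \<longrightarrow> le a y) \<and> (\<forall>x\<in>V. le x a \<longrightarrow> le x b) \<and> (b = bt \<longrightarrow> a = bt) \<and> (a = tp \<longrightarrow> b = tp)"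
      if ab: "a \<in> V" "b \<in> V" "le a b" for a b
    proof -
      have 1: "\<forall>y\<in>V. le b y \<longrightarrow> le a y" using trans[of a b] ab by blast
      have 2: "\<forall>x\<in>V. le x a \<longrightarrow> le x b" using trans[of _ a b] ab by blast
      have 3: "b = bt \<longrightarrow> a = bt" using lebt[of a] ab by blast
      have 4: "a = tp \<longrightarrow> b = tp" using letp[of b] ab by blast
      show ?thesis using 1 2 3 4 by blast
    qed
    have conjL: "tr le bt tp (insert (mn a b) g) d \<longleftrightarrow> tr le bt tp (insert a (insert b g)) d"
      if "a \<in> V" "b \<in> V" "g \<subseteq> V" "d \<subseteq> V" for a b g d
    proof (cases "le a b")
      case True
      have eq: "mn a b = a" using True by (simp add: mn_def)
      have "tr le bt tp (insert a g) d \<longleftrightarrow> tr le bt tp (insert a (insert b g)) d"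
        by (rule chainfacts(1)) (use F[OF that(1,2) True] that in auto)
      then show ?thesis unfolding eq .
    next
      case False
      have ba: "le b a" using lin[OF that(1,2)] False by blast
      have eq: "mn a b = b" using False by (simp add: mn_def)
      have "tr le bt tp (insert b g) d \<longleftrightarrow> tr le bt tp (insert b (insert a g)) d"
        by (rule chainfacts(1)) (use F[OF that(2,1) ba] that in auto)
      then show ?thesis unfolding eq by (simp only: insert_commute)
    qed
    have conjR: "tr le bt tp g (insert (mn a b) d) \<longleftrightarrow> tr le bt tp g (insert a d) \<and> tr le bt tp g (insert b d)"
      if "a \<in> V" "b \<in> V" "g \<subseteq> V" "d \<subseteq> V" for a b g d
    proof (cases "le a b")
      case True
      have eq: "mn a b = a" using True by (simp add: mn_def)
      have "tr le bt tp g (insert a d) \<longleftrightarrow> tr le bt tp g (insert a d) \<and> tr le bt tp g (insert b d)"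
        by (rule chainfacts(2)) (use F[OF that(1,2) True] that in auto)
      then show ?thesis unfolding eq .
    next
      case False
      have ba: "le b a" using lin[OF that(1,2)] False by blast
      have eq: "mn a b = b" using False by (simp add: mn_def)
      have "tr le bt tp g (insert b d) \<longleftrightarrow> tr le bt tp g (insert b d) \<and> tr le bt tp g (insert a d)"
        by (rule chainfacts(2)) (use F[OF that(2,1) ba] that in auto)
      then show ?thesis unfolding eq by (simp only: conj_commute)
    qed
    have disjR: "tr le bt tp g (insert (mx a b) d) \<longleftrightarrow> tr le bt tp g (insert a (insert b d))"
      if "a \<in> V" "b \<in> V" "g \<subseteq> V" "d \<subseteq> V" for a b g d
    proof (cases "le a b")
      case True
      have eq: "mx a b = b" using True by (simp add: mx_def)
      have "tr le bt tp g (insert b d) \<longleftrightarrow> tr le bt tp g (insert a (insert b d))"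
        by (rule chainfacts(3)) (use F[OF that(1,2) True] that in auto)
      then show ?thesis unfolding eq .
    next
      case False
      have ba: "le b a" using lin[OF that(1,2)] False by blast
      have eq: "mx a b = a" using False by (simp add: mx_def)
      have "tr le bt tp g (insert a d) \<longleftrightarrow> tr le bt tp g (insert b (insert a d))"
        by (rule chainfacts(3)) (use F[OF that(2,1) ba] that in auto)
      then show ?thesis unfolding eq by (simp only: insert_commute)
    qed
    have disjL: "tr le bt tp (insert (mx a b) g) d \<longleftrightarrow> tr le bt tp (insert a g) d \<and> tr le bt tp (insert b g) d"
      if "a \<in> V" "b \<in> V" "g \<subseteq> V" "d \<subseteq> V" for a b g d
    proof (cases "le a b")
      case True
      have eq: "mx a b = b" using True by (simp add: mx_def)
      have "tr le bt tp (insert b g) d \<longleftrightarrow> tr le bt tp (insert a g) d \<and> tr le bt tp (insert b g) d"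
        by (rule chainfacts(4)) (use F[OF that(1,2) True] that in auto)
      then show ?thesis unfolding eq .
    next
      case False
      have ba: "le b a" using lin[OF that(1,2)] False by blast
      have eq: "mx a b = a" using False by (simp add: mx_def)
      have "tr le bt tp (insert a g) d \<longleftrightarrow> tr le bt tp (insert b g) d \<and> tr le bt tp (insert a g) d"
        by (rule chainfacts(4)) (use F[OF that(2,1) ba] that in auto)
      then show ?thesis unfolding eq by (simp only: conj_commute)
    qed
    have img: "\<And>v h G. \<forall>n. v n \<in> V \<Longrightarrow> \<forall>x\<in>V. \<forall>y\<in>V. h x y \<in> V \<Longrightarrow> beval v h ` G \<subseteq> V"
      using evV by blast
    have c: "admits_G_conj V le bt tp"
      unfolding admits_G_conj_def
    proof (intro exI[of _ mn] conjI mnV allI)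
      fix G D A B
      show "bcons V le bt tp mn (insert (BOp A B) G) D = bcons V le bt tp mn (insert A (insert B G)) D"
        by (rule bcons_cong) (simp add: conjL evV mnV img)
      show "bcons V le bt tp mn G (insert (BOp A B) D) = (bcons V le bt tp mn G (insert A D) \<and> bcons V le bt tp mn G (insert B D))"
        by (rule bcons_cong2) (simp add: conjR evV mnV img)
    qed
    have d: "admits_G_disj V le bt tp"
      unfolding admits_G_disj_def
    proof (intro exI[of _ mx] conjI mxV allI)
      fix G D A B
      show "bcons V le bt tp mx G (insert (BOp A B) D) = bcons V le bt tp mx G (insert A (insert B D))"
        by (rule bcons_cong) (simp add: disjR evV mxV img)
      show "bcons V le bt tp mx (insert (BOp A B) G) D = (bcons V le bt tp mx (insert A G) D \<and> bcons V le bt tp mx (insert B G) D)"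
        by (rule bcons_cong2) (simp add: disjL evV mxV img)
    qed
    show ?thesis using c d by blast
  qed
  show ?thesis using neg cond conj_tot tot_both by blast
qed

end
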